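(* Assume $\theta_i<1$ for all $i$ and $\theta_j>0$ for some $j$. If $\theta_{\max}<1/2$, then for every $x(0)\in\Delta_n$ the trajectory $(V(k),x(k))$ of system (B) converges exponentially fast; in particular $x(k)$ converges exponentially to the unique equilibrium social power $x^*$, i.e. the unique $x^*\in\Delta_n$ with $x^*=(I_n-\Theta)(I_n-W(x^* )^T\Theta)^{-1}\mathbf 1_n/n$.
   Context: Let $n\ge 2$, $\mathbf 1_n$ the all-ones vector, $I_n$ the identity matrix, $\Delta_n=\{x\in\mathbb R^n: x\ge 0,\ \mathbf 1_n^Tx=1\}$. Let $C\in\mathbb R^{n\times n}$ be a nonnegative row-stochastic matrix with zero diagonal, $\theta=(\theta_1,\dots,\theta_n)\in[0,1]^n$, $\Theta=\mathrm{diag}(\theta)$, $\theta_{\max}=\max_j\theta_j$, and for $x\in\mathbb R^n$, $W(x)=\mathrm{diag}(x)+(I_n-\mathrm{diag}(x))C$. System (B): $V(k+1)=\Theta W(x(k))V(k)+I_n-\Theta$, $x(k+1)=V(k+1)^T\mathbf 1_n/n$, $k=0,1,2,\dots$, with $V(0)=I_n$ and $x(0)\in\Delta_n$. An equilibrium is a pair $(V^*,x^* )$ with $V^*$ row-stochastic, $x^*\in\Delta_n$, $V^*=\Theta W(x^* )V^*+I_n-\Theta$, $x^*=(V^* )^T\mathbf 1_n/n$; $x^*$ is its equilibrium social power. *)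

theory Defs
  imports "HOL-Analysis.Analysis"
begin

definition diagm :: "real^'n \<Rightarrow> real^'n^'n" where
  "diagm x = (\<chi> i j. if i = j then x $ i else 0)"

definition ones :: "real^'n" where
  "ones = (\<chi> i. 1)"

definition prob_simplex :: "(real^'n) set" where
  "prob_simplex = {x. (\<forall>i. 0 \<le> x $ i) \<and> (\<Sum>i\<in>UNIV. x $ i) = 1}"

definition row_stochastic :: "real^'n^'n \<Rightarrow> bool" where
  "row_stochastic A \<longleftrightarrow> (\<forall>i j. 0 \<le> A $ i $ j) \<and> (\<forall>i. (\<Sum>j\<in>UNIV. A $ i $ j) = 1)"

definition Wmat :: "real^'n^'n \<Rightarrow> real^'n \<Rightarrow> real^'n^'n" where
  "Wmat C x = diagm x + (mat 1 - diagm x) ** C"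

fun trajB :: "real^'n^'n \<Rightarrow> real^'n \<Rightarrow> real^'n \<Rightarrow> nat \<Rightarrow> (real^'n^'n) \<times> (real^'n)" where
  "trajB C \<theta> x0 0 = (mat 1, x0)"
| "trajB C \<theta> x0 (Suc k) =
     (let (V, x) = trajB C \<theta> x0 k;
          V' = diagm \<theta> ** Wmat C x ** V + (mat 1 - diagm \<theta>)
      in (V', (1 / real CARD('n)) *\<^sub>R (transpose V' *v ones)))"

definition eq_social_power :: "real^'n^'n \<Rightarrow> real^'n \<Rightarrow> real^'n \<Rightarrow> bool" where
  "eq_social_power C \<theta> xs \<longleftrightarrow> xs \<in> prob_simplex \<and>
     invertible (mat 1 - transpose (Wmat C xs) ** diagm \<theta>) \<and>
     xs = (mat 1 - diagm \<theta>) ** matrix_inv (mat 1 - transpose (Wmat C xs) ** diagm \<theta>)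
            *v ((1 / real CARD('n)) *\<^sub>R ones)"

end

theory Submission
  imports Defs
begin

lemma diagm_mult: "(diagm d ** A) $ i $ j = d $ i * A $ i $ j"
  by (simp add: diagm_def matrix_matrix_mult_def if_distrib if_distribR sum.delta cong: if_cong)

lemma Wmat_nth: "Wmat C x $ i $ k = (if i = k then x $ i else 0) + (1 - x $ i) * C $ i $ k"
  by (simp add: Wmat_def diagm_def matrix_matrix_mult_def mat_def if_distrib if_distribR sum.delta algebra_simps cong: if_cong)

lemma WV_nth: "(Wmat C x ** V) $ i $ j = x $ i * V $ i $ j + (1 - x $ i) * (\<Sum>k\<in>UNIV. C $ i $ k * V $ k $ j)"
proof -
  have "(Wmat C x ** V) $ i $ j = (\<Sum>k\<in>UNIV. (if i = k then x$i*V$k$j else 0) + (1-x$i)*(C$i$k*V$k$j))"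
    by (simp add: matrix_matrix_mult_def Wmat_nth, rule sum.cong, auto simp: algebra_simps)
  also have "\<dots> = x $ i * V $ i $ j + (1 - x $ i) * (\<Sum>k\<in>UNIV. C $ i $ k * V $ k $ j)"
    by (simp add: sum.distrib sum_distrib_left)
  finally show ?thesis .
qed

lemma TWV_nth: "(diagm t ** Wmat C x ** V) $ i $ j = t $ i * (x $ i * V $ i $ j + (1 - x $ i) * (\<Sum>k\<in>UNIV. C $ i $ k * V $ k $ j))"
  by (simp only: matrix_mul_assoc[symmetric] diagm_mult WV_nth)

lemma IT_nth: "(mat 1 - diagm t) $ i $ j = (if i = j then 1 - t $ i else 0)"
  by (simp add: diagm_def mat_def)

lemma trV_nth: "(transpose V *v ones) $ j = (\<Sum>i\<in>UNIV. V $ i $ j)"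
  by (simp add: transpose_def matrix_vector_mult_def ones_def)

definition xof :: "real^'n^'n \<Rightarrow> real^'n" where
  "xof V = (1 / real CARD('n)) *\<^sub>R (transpose V *v ones)"

lemma xof_nth: fixes V :: "real^'n^'n" shows "xof V $ j = (\<Sum>i\<in>UNIV. V $ i $ j) / real CARD('n)"
  unfolding xof_def by (simp only: vector_scaleR_component trV_nth) simp

lemma simplex_le1: assumes "x \<in> prob_simplex" shows "x $ i \<le> 1"
proof -
  have "x $ i \<le> (\<Sum>k\<in>UNIV. x $ k)"
    using assms unfolding prob_simplex_def by (intro member_le_sum) auto
  then show ?thesis using assms unfolding prob_simplex_def by simp
qed

lemma xof_simplex: fixes V :: "real^'n^'n" assumes "row_stochastic V" shows "xof V \<in> prob_simplex"
proof -
  have "(\<Sum>j\<in>UNIV. xof V $ j) = (\<Sum>i\<in>UNIV. \<Sum>j\<in>UNIV. V $ i $ j) / real CARD('n)"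
    by (simp add: xof_nth sum_divide_distrib[symmetric]) (rule sum.swap)
  also have "\<dots> = 1" using assms unfolding row_stochastic_def by simp
  finally show ?thesis using assms unfolding prob_simplex_def row_stochastic_def
    by (auto simp: xof_nth intro!: sum_nonneg divide_nonneg_nonneg)
qed

lemma W_stoch:
  assumes "row_stochastic C" "x \<in> prob_simplex"
  shows "row_stochastic (Wmat C x)"
proof -
  have le1: "\<And>i. x $ i \<le> 1" using simplex_le1[OF assms(2)] .
  have nn: "\<And>i. 0 \<le> x $ i" using assms(2) unfolding prob_simplex_def by auto
  show ?thesis unfolding row_stochastic_def
  proof (intro conjI allI)
    fix i j show "0 \<le> Wmat C x $ i $ j"
      using le1[of i] nn[of i] assms(1) unfolding row_stochastic_def Wmat_nth by auto
  next
    fix i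
    have "(\<Sum>j\<in>UNIV. Wmat C x $ i $ j) = x $ i + (1 - x $ i) * (\<Sum>j\<in>UNIV. C $ i $ j)"
      by (simp add: Wmat_nth sum.distrib sum_distrib_left[symmetric])
    then show "(\<Sum>j\<in>UNIV. Wmat C x $ i $ j) = 1"
      using assms(1) unfolding row_stochastic_def by simp
  qed
qed

lemma F_stoch:
  assumes C: "row_stochastic C" and x: "x \<in> prob_simplex" and V: "row_stochastic V"
    and t0: "\<forall>i. 0 \<le> t $ i" and t1: "\<forall>i. t $ i \<le> 1"
  shows "row_stochastic (diagm t ** Wmat C x ** V + (mat 1 - diagm t))"
proof -
  have W: "row_stochastic (Wmat C x)" using W_stoch[OF C x] .
  have e: "(diagm t ** Wmat C x ** V) $ i $ j = t $ i * (\<Sum>k\<in>UNIV. Wmat C x $ i $ k * V $ k $ j)" for i j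
    by (simp only: matrix_mul_assoc[symmetric] diagm_mult) (simp add: matrix_matrix_mult_def)
  show ?thesis unfolding row_stochastic_def
  proof (intro conjI allI)
    fix i j
    have "0 \<le> t $ i * (\<Sum>k\<in>UNIV. Wmat C x $ i $ k * V $ k $ j)"
      using W V t0 unfolding row_stochastic_def by (auto intro!: mult_nonneg_nonneg sum_nonneg)
    then show "0 \<le> (diagm t ** Wmat C x ** V + (mat 1 - diagm t)) $ i $ j"
      using t1 by (simp only: vector_add_component e IT_nth) auto
  next
    fix i
    have "(\<Sum>j\<in>UNIV. (diagm t ** Wmat C x ** V + (mat 1 - diagm t)) $ i $ j)
       = t $ i * (\<Sum>k\<in>UNIV. Wmat C x $ i $ k * (\<Sum>j\<in>UNIV. V $ k $ j)) + (1 - t $ i)"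
      by (simp only: vector_add_component e IT_nth sum.distrib)
         (simp add: sum_distrib_left mult.assoc, subst sum.swap, simp)
    also have "\<dots> = 1" using W V unfolding row_stochastic_def by simp
    finally show "(\<Sum>j\<in>UNIV. (diagm t ** Wmat C x ** V + (mat 1 - diagm t)) $ i $ j) = 1" .
  qed
qed

definition rs :: "real^'n^'n \<Rightarrow> 'n \<Rightarrow> real" where
  "rs A i = (\<Sum>j\<in>UNIV. \<bar>A $ i $ j\<bar>)"

lemma rs_nonneg: "0 \<le> rs A i" unfolding rs_def by (auto intro: sum_nonneg)

lemma contr:
  fixes V V' :: "real^'n^'n" and t :: real
  assumes C: "row_stochastic C" and t0: "\<forall>i. 0 \<le> th $ i" and tt: "\<forall>i. th $ i \<le> t"
    and x: "x = xof V" and x': "x' = xof V'"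
    and xs: "x \<in> prob_simplex" and xs': "x' \<in> prob_simplex"
    and V': "row_stochastic V'" and N: "\<forall>i. rs (V - V') i \<le> N"
  shows "rs (diagm th ** Wmat C x ** V - diagm th ** Wmat C x' ** V') i \<le> 2 * t * N"
proof -
  define D where "D = V - V'"
  define d where "d l = x $ l - x' $ l" for l
  define n where "n = real CARD('n)"
  have n0: "0 < n" unfolding n_def by simp
  have N0: "0 \<le> N" using N rs_nonneg order_trans by blast
  have Dn: "D $ a $ b = V $ a $ b - V' $ a $ b" for a b unfolding D_def by simp
  have dsum: "(\<Sum>l\<in>UNIV. d l) = 0"
    using xs xs' unfolding d_def prob_simplex_def by (simp add: sum_subtractf)
  have dl: "d l = (\<Sum>m\<in>UNIV. D $ m $ l) / n" for l
    unfolding d_def x x' xof_nth n_def Dn by (simp add: sum_subtractf diff_divide_distrib)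
  have A: "(\<Sum>l\<in>UNIV. \<bar>d l\<bar>) \<le> N"
  proof -
    have "(\<Sum>l\<in>UNIV. \<bar>d l\<bar>) \<le> (\<Sum>l\<in>UNIV. (\<Sum>m\<in>UNIV. \<bar>D $ m $ l\<bar>) / n)"
      unfolding dl using n0 by (intro sum_mono) (simp add: divide_right_mono sum_abs)
    also have "\<dots> = (\<Sum>m\<in>UNIV. \<Sum>l\<in>UNIV. \<bar>D $ m $ l\<bar>) / n"
      using sum.swap[of "\<lambda>l m. \<bar>D $ m $ l\<bar>" UNIV UNIV] by (simp add: sum_divide_distrib[symmetric])
    also have "\<dots> \<le> (\<Sum>m\<in>(UNIV::'n set). N) / n"
      using N n0 unfolding rs_def D_def by (intro divide_right_mono sum_mono) auto
    also have "\<dots> = N" unfolding n_def by simp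
    finally show ?thesis .
  qed
  have B: "2 * \<bar>d i\<bar> \<le> (\<Sum>l\<in>UNIV. \<bar>d l\<bar>)"
  proof -
    have s1: "(\<Sum>l\<in>UNIV. \<bar>d l\<bar>) = \<bar>d i\<bar> + (\<Sum>l\<in>UNIV-{i}. \<bar>d l\<bar>)"
      by (simp add: sum.remove)
    have s2: "(\<Sum>l\<in>UNIV. d l) = d i + (\<Sum>l\<in>UNIV-{i}. d l)"
      by (simp add: sum.remove)
    have "\<bar>\<Sum>l\<in>UNIV-{i}. d l\<bar> \<le> (\<Sum>l\<in>UNIV-{i}. \<bar>d l\<bar>)" by (rule sum_abs)
    then show ?thesis using s1 s2 dsum by linarith
  qed
  have xi0: "0 \<le> x $ i" and xi1: "x $ i \<le> 1"
    using xs simplex_le1[OF xs] unfolding prob_simplex_def by auto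
  have Cnn: "0 \<le> C $ i $ k" for k using C unfolding row_stochastic_def by auto
  have V'nn: "0 \<le> V' $ a $ b" for a b using V' unfolding row_stochastic_def by auto
  have eq: "(diagm th ** Wmat C x ** V - diagm th ** Wmat C x' ** V') $ i $ j
     = th $ i * (x $ i * D $ i $ j + (1 - x $ i) * (\<Sum>k\<in>UNIV. C $ i $ k * D $ k $ j)
         + d i * (V' $ i $ j - (\<Sum>k\<in>UNIV. C $ i $ k * V' $ k $ j)))" for j
    unfolding TWV_nth vector_minus_component Dn d_def
    by (simp add: right_diff_distrib sum_subtractf algebra_simps)
  have bnd: "\<bar>(diagm th ** Wmat C x ** V - diagm th ** Wmat C x' ** V') $ i $ j\<bar>
     \<le> th $ i * (x $ i * \<bar>D $ i $ j\<bar> + (1 - x $ i) * (\<Sum>k\<in>UNIV. C $ i $ k * \<bar>D $ k $ j\<bar>)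
         + \<bar>d i\<bar> * (V' $ i $ j + (\<Sum>k\<in>UNIV. C $ i $ k * V' $ k $ j)))" for j
  proof -
    have s: "\<bar>\<Sum>k\<in>UNIV. C $ i $ k * D $ k $ j\<bar> \<le> (\<Sum>k\<in>UNIV. C $ i $ k * \<bar>D $ k $ j\<bar>)"
      using sum_abs[of "\<lambda>k. C $ i $ k * D $ k $ j" UNIV] Cnn by (simp add: abs_mult)
    have p: "0 \<le> (\<Sum>k\<in>UNIV. C $ i $ k * V' $ k $ j)" using Cnn V'nn by (auto intro: sum_nonneg)
    have v: "\<bar>V' $ i $ j - (\<Sum>k\<in>UNIV. C $ i $ k * V' $ k $ j)\<bar> \<le> V' $ i $ j + (\<Sum>k\<in>UNIV. C $ i $ k * V' $ k $ j)"
      using p V'nn[of i j] by linarith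
    have "\<bar>x $ i * D $ i $ j + (1 - x $ i) * (\<Sum>k\<in>UNIV. C $ i $ k * D $ k $ j)
         + d i * (V' $ i $ j - (\<Sum>k\<in>UNIV. C $ i $ k * V' $ k $ j))\<bar>
       \<le> x $ i * \<bar>D $ i $ j\<bar> + (1 - x $ i) * (\<Sum>k\<in>UNIV. C $ i $ k * \<bar>D $ k $ j\<bar>)
         + \<bar>d i\<bar> * (V' $ i $ j + (\<Sum>k\<in>UNIV. C $ i $ k * V' $ k $ j))"
    proof -
      have a1: "\<bar>x $ i * D $ i $ j\<bar> = x $ i * \<bar>D $ i $ j\<bar>" using xi0 by (simp add: abs_mult)
      have a2: "\<bar>(1 - x $ i) * (\<Sum>k\<in>UNIV. C $ i $ k * D $ k $ j)\<bar> \<le> (1 - x $ i) * (\<Sum>k\<in>UNIV. C $ i $ k * \<bar>D $ k $ j\<bar>)"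
        using xi1 s by (simp add: abs_mult mult_left_mono)
      have a3: "\<bar>d i * (V' $ i $ j - (\<Sum>k\<in>UNIV. C $ i $ k * V' $ k $ j))\<bar> \<le> \<bar>d i\<bar> * (V' $ i $ j + (\<Sum>k\<in>UNIV. C $ i $ k * V' $ k $ j))"
        using v by (simp add: abs_mult mult_left_mono)
      show ?thesis using a1 a2 a3 abs_triangle_ineq
        by (smt (verit, best))
    qed
    then show ?thesis unfolding eq using t0 by (simp add: abs_mult mult_left_mono)
  qed
  have "rs (diagm th ** Wmat C x ** V - diagm th ** Wmat C x' ** V') i
     \<le> (\<Sum>j\<in>UNIV. th $ i * (x $ i * \<bar>D $ i $ j\<bar> + (1 - x $ i) * (\<Sum>k\<in>UNIV. C $ i $ k * \<bar>D $ k $ j\<bar>)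
         + \<bar>d i\<bar> * (V' $ i $ j + (\<Sum>k\<in>UNIV. C $ i $ k * V' $ k $ j))))"
    unfolding rs_def by (rule sum_mono) (rule bnd)
  also have "\<dots> = th $ i * (x $ i * rs D i + (1 - x $ i) * (\<Sum>k\<in>UNIV. C $ i $ k * rs D k)
         + \<bar>d i\<bar> * ((\<Sum>j\<in>UNIV. V' $ i $ j) + (\<Sum>k\<in>UNIV. C $ i $ k * (\<Sum>j\<in>UNIV. V' $ k $ j))))"
  proof -
    have e1: "(\<Sum>j\<in>UNIV. \<Sum>k\<in>UNIV. C $ i $ k * \<bar>D $ k $ j\<bar>) = (\<Sum>k\<in>UNIV. C $ i $ k * rs D k)"
      unfolding rs_def sum_distrib_left by (rule sum.swap)
    have e2: "(\<Sum>j\<in>UNIV. \<Sum>k\<in>UNIV. C $ i $ k * V' $ k $ j) = (\<Sum>k\<in>UNIV. C $ i $ k * (\<Sum>j\<in>UNIV. V' $ k $ j))"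
      unfolding sum_distrib_left by (rule sum.swap)
    show ?thesis
      by (simp add: sum_distrib_left[symmetric] sum.distrib distrib_left e1 e2 rs_def)
  qed
  also have "\<dots> = th $ i * (x $ i * rs D i + (1 - x $ i) * (\<Sum>k\<in>UNIV. C $ i $ k * rs D k) + \<bar>d i\<bar> * 2)"
    using V' C unfolding row_stochastic_def by simp
  also have "\<dots> \<le> th $ i * (x $ i * N + (1 - x $ i) * N + N)"
  proof -
    have "(\<Sum>k\<in>UNIV. C $ i $ k * rs D k) \<le> (\<Sum>k\<in>UNIV. C $ i $ k * N)"
      using N Cnn unfolding D_def by (intro sum_mono mult_left_mono) auto
    also have "\<dots> = N" using C unfolding row_stochastic_def by (simp add: sum_distrib_right[symmetric])
    finally have c1: "(\<Sum>k\<in>UNIV. C $ i $ k * rs D k) \<le> N" .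
    have c2: "rs D i \<le> N" using N unfolding D_def by auto
    have "x $ i * rs D i + (1 - x $ i) * (\<Sum>k\<in>UNIV. C $ i $ k * rs D k) + \<bar>d i\<bar> * 2
        \<le> x $ i * N + (1 - x $ i) * N + N"
      using c1 c2 A B xi0 xi1 by (smt (verit) mult_left_mono)
    then show ?thesis using t0 by (simp add: mult_left_mono)
  qed
  also have "\<dots> = th $ i * (2 * N)" by (simp add: algebra_simps)
  also have "\<dots> \<le> t * (2 * N)" using tt N0 by (simp add: mult_right_mono)
  finally show ?thesis by simp
qed


lemma inv_props: assumes "invertible A"
  shows "A ** matrix_inv A = mat 1" "matrix_inv A ** A = mat 1"
  using assms unfolding invertible_def matrix_inv_def by (metis (mono_tags, lifting) someI_ex)+

lemma inv_unique: fixes A B C :: "real^'n^'n"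
  assumes "A ** B = mat 1" "C ** A = mat 1" shows "B = C"
  by (metis assms matrix_mul_assoc matrix_mul_lid matrix_mul_rid)

lemma matrix_sub_rdistrib: fixes A B C :: "real^'n^'n" shows "(A - B) ** C = A ** C - B ** C"
  by (simp add: matrix_matrix_mult_def vec_eq_iff sum_subtractf left_diff_distrib)

lemma transpose_diff: fixes A B :: "real^'n^'n" shows "transpose (A - B) = transpose A - transpose B"
  by (simp add: transpose_def vec_eq_iff)

lemma transpose_diagm: "transpose (diagm t) = diagm t"
  by (simp add: transpose_def diagm_def vec_eq_iff)

lemma closed_rs: "closed {A :: real^'n^'n. row_stochastic A}"
  unfolding row_stochastic_def
  by (intro closed_Collect_conj closed_Collect_all closed_Collect_le closed_Collect_eq continuous_intros)

lemma diagm_vec: "(diagm t *v u) $ i = t $ i * u $ i"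
  by (simp add: matrix_vector_mult_def diagm_def if_distrib if_distribR sum.delta cong: if_cong)

lemma Mv_nth: "((mat 1 - diagm t ** W) *v v) $ i = v $ i - t $ i * (\<Sum>k\<in>UNIV. W $ i $ k * v $ k)"
proof -
  have "(mat 1 - diagm t ** W) *v v = v - diagm t *v (W *v v)"
    by (simp add: matrix_vector_mult_diff_rdistrib matrix_vector_mul_assoc)
  then have "((mat 1 - diagm t ** W) *v v) $ i = v $ i - (diagm t *v (W *v v)) $ i" by simp
  then show ?thesis by (simp only: diagm_vec) (simp add: matrix_vector_mult_def)
qed

lemma M_invertible:
  fixes W :: "real^'n^'n"
  assumes W: "row_stochastic W" and t0: "\<forall>i. 0 \<le> t $ i" and t1: "\<forall>i. t $ i < 1"
  shows "invertible (mat 1 - diagm t ** W)"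
proof -
  have "\<forall>v. (mat 1 - diagm t ** W) *v v = 0 \<longrightarrow> v = 0"
  proof (intro allI impI)
    fix v :: "real^'n" assume h: "(mat 1 - diagm t ** W) *v v = 0"
    define m where "m = Max (range (\<lambda>k. \<bar>v $ k\<bar>))"
    have mge: "\<bar>v $ k\<bar> \<le> m" for k unfolding m_def by (rule Max_ge) auto
    have "m \<in> range (\<lambda>k. \<bar>v $ k\<bar>)" unfolding m_def by (rule Max_in) auto
    then obtain i0 where i0: "\<bar>v $ i0\<bar> = m" by auto
    have e: "v $ i0 = t $ i0 * (\<Sum>k\<in>UNIV. W $ i0 $ k * v $ k)"
      using h[THEN arg_cong[where f="\<lambda>u. u $ i0"]] unfolding Mv_nth by simp
    have "\<bar>\<Sum>k\<in>UNIV. W $ i0 $ k * v $ k\<bar> \<le> (\<Sum>k\<in>UNIV. W $ i0 $ k * m)"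
      using W mge unfolding row_stochastic_def
      by (intro order_trans[OF sum_abs] sum_mono) (simp add: abs_mult mult_left_mono)
    also have "\<dots> = m" using W unfolding row_stochastic_def by (simp add: sum_distrib_right[symmetric])
    finally have S: "\<bar>\<Sum>k\<in>UNIV. W $ i0 $ k * v $ k\<bar> \<le> m" .
    have "m = t $ i0 * \<bar>\<Sum>k\<in>UNIV. W $ i0 $ k * v $ k\<bar>"
      using e i0 t0 by (metis abs_mult abs_of_nonneg)
    also have "\<dots> \<le> t $ i0 * m" using S t0 by (simp add: mult_left_mono)
    finally have mt: "m \<le> t $ i0 * m" .
    have "m \<le> 0"
    proof (rule ccontr)
      assume "\<not> m \<le> 0"
      then have "t $ i0 * m < 1 * m" using t1 by (intro mult_strict_right_mono) auto
      then show False using mt by simp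
    qed
    then have "\<forall>k. v $ k = 0" using mge by (meson abs_le_zero_iff order_trans)
    then show "v = 0" by (simp add: vec_eq_iff)
  qed
  then show ?thesis
    using matrix_left_invertible_ker(1) invertible_left_inverse by blast
qed

lemma fix_iff:
  fixes V W :: "real^'n^'n"
  assumes inv: "invertible (mat 1 - diagm t ** W)"
  shows "V = diagm t ** W ** V + (mat 1 - diagm t) \<longleftrightarrow>
         V = matrix_inv (mat 1 - diagm t ** W) ** (mat 1 - diagm t)"
proof -
  define M where "M = mat 1 - diagm t ** W"
  define T where "T = (mat 1 :: real^'n^'n) - diagm t"
  have MV: "M ** V = V - diagm t ** W ** V" unfolding M_def by (simp add: matrix_sub_rdistrib)
  have i1: "M ** matrix_inv M = mat 1" and i2: "matrix_inv M ** M = mat 1"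
    using inv_props[OF inv] unfolding M_def by auto
  have "V = diagm t ** W ** V + T \<longleftrightarrow> M ** V = T" unfolding MV by (auto simp: algebra_simps)
  also have "\<dots> \<longleftrightarrow> V = matrix_inv M ** T"
    by (metis i1 i2 matrix_mul_assoc matrix_mul_lid)
  finally show ?thesis unfolding M_def T_def .
qed

lemma xof_eq:
  fixes W :: "real^'n^'n"
  assumes inv: "invertible (mat 1 - diagm t ** W)"
  shows "xof (matrix_inv (mat 1 - diagm t ** W) ** (mat 1 - diagm t)) =
    (mat 1 - diagm t) ** matrix_inv (mat 1 - transpose W ** diagm t) *v ((1 / real CARD('n)) *\<^sub>R ones)"
proof -
  define M where "M = mat 1 - diagm t ** W"
  define T where "T = (mat 1 :: real^'n^'n) - diagm t"
  have tM: "transpose M = mat 1 - transpose W ** diagm t"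
    unfolding M_def by (simp add: transpose_diff matrix_transpose_mul transpose_diagm)
  have tT: "transpose T = T" unfolding T_def by (simp add: transpose_diff transpose_diagm)
  have invT: "invertible (transpose M)" using transpose_invertible inv unfolding M_def by blast
  have a: "transpose M ** transpose (matrix_inv M) = mat 1"
    using inv_props(2)[OF inv] unfolding M_def[symmetric] by (metis matrix_transpose_mul transpose_mat)
  have b: "matrix_inv (transpose M) ** transpose M = mat 1" using inv_props(2)[OF invT] .
  have c: "transpose (matrix_inv M) = matrix_inv (transpose M)" using inv_unique[OF a b] .
  have "xof (matrix_inv M ** T) = (1 / real CARD('n)) *\<^sub>R (transpose (matrix_inv M ** T) *v ones)"
    by (simp only: xof_def)
  also have "\<dots> = (1 / real CARD('n)) *\<^sub>R ((T ** matrix_inv (transpose M)) *v ones)"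
    by (simp only: matrix_transpose_mul tT c)
  also have "\<dots> = (T ** matrix_inv (transpose M)) *v ((1 / real CARD('n)) *\<^sub>R ones)"
    by (simp only: matrix_vector_mult_scaleR)
  finally show ?thesis unfolding M_def T_def tM[unfolded M_def] .
qed

definition ninf :: "real^'n^'n \<Rightarrow> real" where "ninf A = Max (range (rs A))"

lemma rs_le_ninf: "rs A i \<le> ninf A" unfolding ninf_def by (rule Max_ge) auto

lemma ninf_le: "(\<forall>i. rs A i \<le> N) \<Longrightarrow> ninf A \<le> N" unfolding ninf_def by (subst Max_le_iff) auto

lemma ninf_nonneg: "0 \<le> ninf A" using rs_le_ninf rs_nonneg order_trans by blast

lemma norm_le_ninf: fixes A :: "real^'n^'n" shows "norm A \<le> real CARD('n) * ninf A"
proof -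
  have "norm A \<le> (\<Sum>i\<in>UNIV. norm (A $ i))" unfolding norm_vec_def by (rule L2_set_le_sum) auto
  also have "\<dots> \<le> (\<Sum>i\<in>(UNIV::'n set). ninf A)"
    by (intro sum_mono order_trans[OF norm_le_l1_cart]) (simp add: rs_le_ninf[unfolded rs_def])
  finally show ?thesis by simp
qed

lemma rs_le_norm: fixes A :: "real^'n^'n" shows "rs A i \<le> real CARD('n) * norm A"
proof -
  have "rs A i \<le> (\<Sum>j\<in>(UNIV::'n set). norm A)" unfolding rs_def
    by (intro sum_mono order_trans[OF component_le_norm_cart Finite_Cartesian_Product.norm_nth_le])
  then show ?thesis by simp
qed

lemma ninf_le_norm: fixes A :: "real^'n^'n" shows "ninf A \<le> real CARD('n) * norm A"
  by (intro ninf_le allI rs_le_norm)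

lemma rs_zero: fixes A :: "real^'n^'n" assumes "\<forall>i. rs A i \<le> 0" shows "A = 0"
proof -
  have "\<bar>A $ i $ j\<bar> \<le> rs A i" for i j unfolding rs_def by (rule member_le_sum) auto
  then have "A $ i $ j = 0" for i j using assms by (meson abs_le_zero_iff order_trans)
  then show ?thesis by (simp add: vec_eq_iff)
qed

lemma xdiff_le:
  fixes V V' :: "real^'n^'n"
  assumes N: "\<forall>i. rs (V - V') i \<le> N"
  shows "norm (xof V - xof V') \<le> N"
proof -
  define D where "D = V - V'"
  define n where "n = real CARD('n)"
  have n0: "0 < n" unfolding n_def by simp
  have dl: "(xof V - xof V') $ l = (\<Sum>m\<in>UNIV. D $ m $ l) / n" for l
    unfolding vector_minus_component xof_nth n_def D_def by (simp add: sum_subtractf diff_divide_distrib)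
  have "norm (xof V - xof V') \<le> (\<Sum>l\<in>UNIV. \<bar>(xof V - xof V') $ l\<bar>)" by (rule norm_le_l1_cart)
  also have "\<dots> \<le> (\<Sum>l\<in>UNIV. (\<Sum>m\<in>UNIV. \<bar>D $ m $ l\<bar>) / n)"
    unfolding dl using n0 by (intro sum_mono) (simp add: divide_right_mono sum_abs)
  also have "\<dots> = (\<Sum>m\<in>UNIV. \<Sum>l\<in>UNIV. \<bar>D $ m $ l\<bar>) / n"
    using sum.swap[of "\<lambda>l m. \<bar>D $ m $ l\<bar>" UNIV UNIV] by (simp add: sum_divide_distrib[symmetric])
  also have "\<dots> \<le> (\<Sum>m\<in>(UNIV::'n set). N) / n"
    using N n0 unfolding rs_def D_def by (intro divide_right_mono sum_mono) auto
  also have "\<dots> = N" unfolding n_def by simp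
  finally show ?thesis .
qed

lemma rs_mat1: "row_stochastic (mat 1 :: real^'n^'n)"
  unfolding row_stochastic_def by (simp add: mat_def)


definition Fm :: "real^'n^'n \<Rightarrow> real^'n \<Rightarrow> real^'n^'n \<Rightarrow> real^'n^'n" where
  "Fm C t V = diagm t ** Wmat C (xof V) ** V + (mat 1 - diagm t)"

lemma Fm_diff: "Fm C t A - Fm C t B = diagm t ** Wmat C (xof A) ** A - diagm t ** Wmat C (xof B) ** B"
  by (simp add: Fm_def)

lemma iter:
  fixes V V' :: "real^'n^'n"
  assumes C: "row_stochastic C" and t0: "\<forall>i. 0 \<le> t $ i" and t1: "\<forall>i. t $ i \<le> 1"
    and tt: "\<forall>i. t $ i \<le> tm"
    and V: "row_stochastic V" and V': "row_stochastic V'"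
  shows "row_stochastic ((Fm C t ^^ m) V) \<and> row_stochastic ((Fm C t ^^ m) V') \<and>
    (\<forall>i. rs ((Fm C t ^^ m) V - (Fm C t ^^ m) V') i \<le> (2 * tm) ^ m * ninf (V - V'))"
proof (induction m)
  case 0
  then show ?case using V V' by (simp add: rs_le_ninf[of "V - V'"])
next
  case (Suc m)
  define A where "A = (Fm C t ^^ m) V"
  define B where "B = (Fm C t ^^ m) V'"
  have A: "row_stochastic A" and B: "row_stochastic B"
    and N: "\<forall>i. rs (A - B) i \<le> (2 * tm) ^ m * ninf (V - V')"
    using Suc unfolding A_def B_def by auto
  have FA: "row_stochastic (Fm C t A)" unfolding Fm_def
    by (rule F_stoch[OF C xof_simplex[OF A] A t0 t1])
  have FB: "row_stochastic (Fm C t B)" unfolding Fm_def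
    by (rule F_stoch[OF C xof_simplex[OF B] B t0 t1])
  have "rs (Fm C t A - Fm C t B) i \<le> 2 * tm * ((2 * tm) ^ m * ninf (V - V'))" for i
    unfolding Fm_diff
    by (rule contr[OF C t0 tt refl refl xof_simplex[OF A] xof_simplex[OF B] B N])
  then show ?case using FA FB unfolding A_def B_def by (simp add: mult.assoc)
qed

lemma traj_Suc:
  "fst (trajB C t x0 (Suc k)) = diagm t ** Wmat C (snd (trajB C t x0 k)) ** fst (trajB C t x0 k) + (mat 1 - diagm t)"
  "snd (trajB C t x0 (Suc k)) = xof (fst (trajB C t x0 (Suc k)))"
  by (cases "trajB C t x0 k"; simp add: xof_def Let_def)+

lemma traj_stoch:
  assumes C: "row_stochastic C" and x0: "x0 \<in> prob_simplex"
    and t0: "\<forall>i. 0 \<le> t $ i" and t1: "\<forall>i. t $ i \<le> 1"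
  shows "row_stochastic (fst (trajB C t x0 k)) \<and> snd (trajB C t x0 k) \<in> prob_simplex"
proof (induction k)
  case 0
  then show ?case using x0 rs_mat1 by simp
next
  case (Suc k)
  have "row_stochastic (fst (trajB C t x0 (Suc k)))"
    unfolding traj_Suc using Suc F_stoch[OF C _ _ t0 t1] by blast
  then show ?case using xof_simplex traj_Suc(2) by metis
qed

lemma traj_F: "fst (trajB C t x0 (Suc (Suc k))) = Fm C t (fst (trajB C t x0 (Suc k)))"
  by (simp only: traj_Suc(1)[of C t x0 "Suc k"] traj_Suc(2)[of C t x0 k] Fm_def)

theorem theorem6:
  fixes C :: "real^'n^'n" and \<theta> :: "real^'n"
  assumes n2: "CARD('n) \<ge> 2"
    and C_stoch: "row_stochastic C"
    and C_diag: "\<forall>i. C $ i $ i = 0"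
    and th_nonneg: "\<forall>i. 0 \<le> \<theta> $ i"
    and th_lt1: "\<forall>i. \<theta> $ i < 1"
    and th_pos: "\<exists>j. 0 < \<theta> $ j"
    and th_max: "Max (range (\<lambda>j. \<theta> $ j)) < 1/2"
  shows "(\<exists>!xs. eq_social_power C \<theta> xs) \<and>
         (\<forall>x0 \<in> prob_simplex. \<exists>Vs xs c \<rho>. eq_social_power C \<theta> xs \<and> 0 \<le> c \<and> 0 \<le> \<rho> \<and> \<rho> < 1 \<and>
           (\<forall>k. norm (fst (trajB C \<theta> x0 k) - Vs) \<le> c * \<rho> ^ k \<and>
                norm (snd (trajB C \<theta> x0 k) - xs) \<le> c * \<rho> ^ k))"
proof -
  define n where "n = real CARD('n)"
  have n1: "1 \<le> n" unfolding n_def by simp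
  define tm where "tm = Max (range (\<lambda>j. \<theta> $ j))"
  have tt: "\<forall>i. \<theta> $ i \<le> tm" unfolding tm_def by (auto intro: Max_ge)
  have tm0: "0 < tm" using th_pos tt by (meson less_le_trans)
  define r where "r = 2 * tm"
  have r0: "0 < r" and r1: "r < 1" using tm0 th_max unfolding r_def tm_def by auto
  have t1: "\<forall>i. \<theta> $ i \<le> 1" using th_lt1 by (simp add: less_imp_le)
  define T where "T = (mat 1 :: real^'n^'n) - diagm \<theta>"
  define S where "S = {A::real^'n^'n. row_stochastic A}"
  obtain m where m: "r ^ m < 1 / (n * n)" using real_arch_pow_inv[of "1 / (n * n)" r] r1 n1 by auto
  have cm: "n * n * r ^ m < 1" using m n1 by (simp add: field_simps)
  define G where "G = Fm C \<theta> ^^ m"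
  have GS: "G ` S \<subseteq> S" unfolding G_def S_def
    using iter[OF C_stoch th_nonneg t1 tt] by blast
  have Gc: "dist (G A) (G B) \<le> (n * n * r ^ m) * dist A B" if "A \<in> S" "B \<in> S" for A B
  proof -
    have "\<forall>i. rs (G A - G B) i \<le> r ^ m * ninf (A - B)"
      using iter[OF C_stoch th_nonneg t1 tt, of A B m] that unfolding G_def S_def r_def by auto
    then have "ninf (G A - G B) \<le> r ^ m * ninf (A - B)" by (rule ninf_le)
    then have "n * ninf (G A - G B) \<le> n * (r ^ m * ninf (A - B))"
      using n1 by (intro mult_left_mono) simp_all
    then have "norm (G A - G B) \<le> n * (r ^ m * ninf (A - B))"
      using norm_le_ninf[of "G A - G B"] unfolding n_def by linarith
    also have "\<dots> \<le> n * (r ^ m * (n * norm (A - B)))"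
      using ninf_le_norm[of "A - B"] n1 r0 unfolding n_def by (simp add: mult_left_mono)
    finally show ?thesis by (simp add: dist_norm algebra_simps)
  qed
  have "\<exists>!V\<in>S. G V = V"
  proof (rule Banach_fix[where c="n * n * r ^ m"])
    show "complete S" unfolding S_def using closed_rs complete_eq_closed by blast
    show "S \<noteq> {}" unfolding S_def using rs_mat1 by blast
    show "0 \<le> n * n * r ^ m" using r0 n1 by simp
    show "n * n * r ^ m < 1" by (rule cm)
    show "G ` S \<subseteq> S" by (rule GS)
  qed (rule Gc)
  then obtain Vs where VsS: "Vs \<in> S" and GVs: "G Vs = Vs" and Vuniq: "\<And>V. V \<in> S \<Longrightarrow> G V = V \<Longrightarrow> V = Vs"
    by blast
  have Vs_st: "row_stochastic Vs" using VsS unfolding S_def by simp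
  define xs where "xs = xof Vs"
  have xsS: "xs \<in> prob_simplex" unfolding xs_def by (rule xof_simplex[OF Vs_st])
  have FVsS: "Fm C \<theta> Vs \<in> S" unfolding S_def Fm_def
    using F_stoch[OF C_stoch xof_simplex[OF Vs_st] Vs_st th_nonneg t1] by simp
  have "G (Fm C \<theta> Vs) = Fm C \<theta> Vs" using GVs unfolding G_def funpow_swap1[symmetric] by simp
  then have FVs: "Fm C \<theta> Vs = Vs" using Vuniq FVsS by blast
  have Winv: "invertible (mat 1 - diagm \<theta> ** Wmat C y)" if "y \<in> prob_simplex" for y
    by (rule M_invertible[OF W_stoch[OF C_stoch that] th_nonneg th_lt1])
  have eq_of: "eq_social_power C \<theta> y \<longleftrightarrow> y = xof (matrix_inv (mat 1 - diagm \<theta> ** Wmat C y) ** T)"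
    if "y \<in> prob_simplex" for y
  proof -
    have "invertible (transpose (mat 1 - diagm \<theta> ** Wmat C y))"
      using transpose_invertible Winv[OF that] by blast
    then have "invertible (mat 1 - transpose (Wmat C y) ** diagm \<theta>)"
      by (simp add: transpose_diff matrix_transpose_mul transpose_diagm)
    then show ?thesis unfolding eq_social_power_def T_def xof_eq[OF Winv[OF that]] using that by auto
  qed
  have Vs_eq: "Vs = matrix_inv (mat 1 - diagm \<theta> ** Wmat C xs) ** T"
    using fix_iff[OF Winv[OF xsS], of Vs] FVs unfolding Fm_def xs_def T_def by simp
  have "xs = xof (matrix_inv (mat 1 - diagm \<theta> ** Wmat C xs) ** T)"
    using arg_cong[OF Vs_eq, of xof] unfolding xs_def[symmetric] .
  then have eqxs: "eq_social_power C \<theta> xs" using eq_of[OF xsS] by blast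
  have uniq: "y = xs" if ey: "eq_social_power C \<theta> y" for y
  proof -
    have yS: "y \<in> prob_simplex" using ey unfolding eq_social_power_def by simp
    define V where "V = matrix_inv (mat 1 - diagm \<theta> ** Wmat C y) ** T"
    have xV: "y = xof V" using eq_of[OF yS] ey unfolding V_def by simp
    have Vfix: "V = diagm \<theta> ** Wmat C y ** V + T"
      using fix_iff[OF Winv[OF yS], of V] unfolding V_def T_def by simp
    have Vsfix: "Vs = diagm \<theta> ** Wmat C xs ** Vs + T" using FVs unfolding Fm_def xs_def T_def by simp
    have dV: "V - Vs = diagm \<theta> ** Wmat C y ** V - diagm \<theta> ** Wmat C xs ** Vs"
    proof -
      have "V - Vs = (diagm \<theta> ** Wmat C y ** V + T) - (diagm \<theta> ** Wmat C xs ** Vs + T)"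
        by (rule arg_cong2[where f="(-)", OF Vfix Vsfix])
      then show ?thesis by simp
    qed
    have "\<forall>i. rs (V - Vs) i \<le> r * ninf (V - Vs)"
    proof
      fix i
      have N: "\<forall>i. rs (V - Vs) i \<le> ninf (V - Vs)" using rs_le_ninf by blast
      have "rs (diagm \<theta> ** Wmat C y ** V - diagm \<theta> ** Wmat C xs ** Vs) i \<le> 2 * tm * ninf (V - Vs)"
        by (rule contr[OF C_stoch th_nonneg tt xV xs_def yS xsS Vs_st N])
      then show "rs (V - Vs) i \<le> r * ninf (V - Vs)" using dV unfolding r_def by simp
    qed
    then have "ninf (V - Vs) \<le> r * ninf (V - Vs)" by (rule ninf_le)
    then have "ninf (V - Vs) \<le> 0"
    proof -
      assume a: "ninf (V - Vs) \<le> r * ninf (V - Vs)"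
      show ?thesis
      proof (rule ccontr)
        assume "\<not> ninf (V - Vs) \<le> 0"
        then have "r * ninf (V - Vs) < 1 * ninf (V - Vs)" using r1 by (intro mult_strict_right_mono) auto
        then show False using a by simp
      qed
    qed
    then have "V - Vs = 0" using rs_zero rs_le_ninf order_trans by blast
    then have "V = Vs" by simp
    then show ?thesis using xV xs_def by blast
  qed
  have part1: "\<exists>!xs. eq_social_power C \<theta> xs" using eqxs uniq by blast
  have part2: "\<exists>Vs xs c \<rho>. eq_social_power C \<theta> xs \<and> 0 \<le> c \<and> 0 \<le> \<rho> \<and> \<rho> < 1 \<and>
           (\<forall>k. norm (fst (trajB C \<theta> x0 k) - Vs) \<le> c * \<rho> ^ k \<and>
                norm (snd (trajB C \<theta> x0 k) - xs) \<le> c * \<rho> ^ k)" if x0: "x0 \<in> prob_simplex" for x0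
  proof -
    let ?V = "\<lambda>k. fst (trajB C \<theta> x0 k)"
    let ?X = "\<lambda>k. snd (trajB C \<theta> x0 k)"
    have st: "row_stochastic (?V k)" for k using traj_stoch[OF C_stoch x0 th_nonneg t1] by blast
    define K where "K = ninf (?V 1 - Vs)"
    have K0: "0 \<le> K" unfolding K_def by (rule ninf_nonneg)
    have claim: "\<forall>i. rs (?V (Suc j) - Vs) i \<le> r ^ j * K" for j
    proof (induction j)
      case 0
      show ?case unfolding K_def using rs_le_ninf[of "?V 1 - Vs"] by simp
    next
      case (Suc j)
      have "?V (Suc (Suc j)) - Vs = Fm C \<theta> (?V (Suc j)) - Fm C \<theta> Vs" by (simp only: traj_F FVs)
      also have "\<dots> = diagm \<theta> ** Wmat C (xof (?V (Suc j))) ** ?V (Suc j) - diagm \<theta> ** Wmat C (xof Vs) ** Vs"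
        by (rule Fm_diff)
      finally have e: "?V (Suc (Suc j)) - Vs = \<dots>" .
      show ?case unfolding e
        using contr[OF C_stoch th_nonneg tt refl refl xof_simplex[OF st] xof_simplex[OF Vs_st] Vs_st Suc]
        unfolding r_def by (simp add: mult.assoc)
    qed
    define c where "c = max (norm (?V 0 - Vs)) (max (norm (x0 - xs)) (n * K / r))"
    have c0: "0 \<le> c" unfolding c_def by (simp add: le_max_iff_disj)
    have bound: "norm (?V k - Vs) \<le> c * r ^ k \<and> norm (?X k - xs) \<le> c * r ^ k" for k
    proof (cases k)
      case 0
      then show ?thesis unfolding c_def by simp
    next
      case (Suc j)
      have a: "n * (r ^ j * K) = (n * K / r) * r ^ k" using r0 unfolding Suc by (simp add: field_simps)
      have b: "(n * K / r) * r ^ k \<le> c * r ^ k" unfolding c_def using r0 by (intro mult_right_mono) auto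
      have "norm (?V k - Vs) \<le> n * ninf (?V k - Vs)" using norm_le_ninf unfolding n_def by blast
      also have "\<dots> \<le> n * (r ^ j * K)" using claim[of j] ninf_le n1 unfolding Suc by (simp add: mult_left_mono)
      finally have v: "norm (?V k - Vs) \<le> c * r ^ k" using a b by linarith
      have "norm (?X k - xs) \<le> r ^ j * K" unfolding Suc traj_Suc(2)[of C \<theta> x0 j] xs_def
        by (rule xdiff_le) (rule claim)
      also have "\<dots> \<le> n * (r ^ j * K)" using n1 mult_right_mono[of 1 n "r ^ j * K"] r0 K0 by simp
      finally show ?thesis using v a b by linarith
    qed
    show ?thesis using eqxs c0 r0 r1 bound by (intro exI[of _ Vs] exI[of _ xs] exI[of _ c] exI[of _ r]) auto
  qed
  show ?thesis using part1 part2 by blast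
qed

end
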